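(* Consider the following optical-network model. Each link $k$ has a set $A_k\subseteq\mathbb{Z}$ of available units. Each trait $t$ has a resource $\mathrm{RI}(t)$, a nonempty integer interval, and for each link $k$ the set $t\oplus k$ of derived traits satisfies: every $t'\in t\oplus k$ has $\mathrm{RI}(t')$ a maximal integer interval contained in $\mathrm{RI}(t)\cap A_k$, and for every maximal integer interval $J\subseteq \mathrm{RI}(t)\cap A_k$ there is $t'\in t\oplus k$ with $\mathrm{RI}(t')=J$. Fix a link $k$ and, for a label $l=(t_a,t_b)$ whose routes end at different nodes, let $l\oplus e=\{(t,t_b): t\in t_a\oplus k\}$, the resulting routes still ending at different nodes. Let $\mathrm{cost}$ be a real-valued function on labels such that for any labels $l_i,l_j$: if $\mathrm{cost}(l_i)\le\mathrm{cost}(l_j)$ then $\mathrm{cost}(l')\le\mathrm{cost}(l)$ for all $l'\in l_i\oplus e$ and all $l\in l_j\oplus e$. Let $l_i=(t_{i,a},t_{i,b})$, $l_j=(t_{j,a},t_{j,b})$ be labels. If $l_i\preceq'_{\ne} l_j$, then for every $l\in l_j\oplus e$ there exists $l'\in l_i\oplus e$ with $l'\preceq'_{\ne} l$.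
   Context: A trait describes a route (sequence of neighboring links) in an optical network together with its cost and the interval of contiguous frequency slot units available on all its links; $t\oplus k$ is the set of traits obtained by appending link $k$. A label is a pair of traits of two link-disjoint routes. For labels $l_i=(t_{i,a},t_{i,b})$, $l_j=(t_{j,a},t_{j,b})$ whose routes end at different nodes: $\mathrm{RI}(l_i)\supseteq_{\ne}\mathrm{RI}(l_j)$ iff $\mathrm{RI}(t_{i,a})\supseteq\mathrm{RI}(t_{j,a})$ and $\mathrm{RI}(t_{i,b})\supseteq\mathrm{RI}(t_{j,b})$; and $l_i\preceq'_{\ne} l_j$ iff $\mathrm{cost}(l_i)\le\mathrm{cost}(l_j)$ and $\mathrm{RI}(l_i)\supseteq_{\ne}\mathrm{RI}(l_j)$. *)

theory Defs
  imports Complex_Main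
begin

definition int_interval :: "int set \<Rightarrow> bool" where
  "int_interval I \<longleftrightarrow> (\<exists>a b. a \<le> b \<and> I = {a..b})"

definition max_int_interval_in :: "int set \<Rightarrow> int set \<Rightarrow> bool" where
  "max_int_interval_in J S \<longleftrightarrow> int_interval J \<and> J \<subseteq> S \<and>
     (\<forall>J'. int_interval J' \<and> J \<subseteq> J' \<and> J' \<subseteq> S \<longrightarrow> J' = J)"

definition label_ext :: "('t \<Rightarrow> 'k \<Rightarrow> 't set) \<Rightarrow> 'k \<Rightarrow> 't \<times> 't \<Rightarrow> ('t \<times> 't) set" where
  "label_ext oplus k l = {(t, snd l) | t. t \<in> oplus (fst l) k}"

definition RI_sup_ne :: "('t \<Rightarrow> int set) \<Rightarrow> 't \<times> 't \<Rightarrow> 't \<times> 't \<Rightarrow> bool" where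
  "RI_sup_ne RI li lj \<longleftrightarrow> RI (fst li) \<supseteq> RI (fst lj) \<and> RI (snd li) \<supseteq> RI (snd lj)"

definition dom_ne :: "('t \<times> 't \<Rightarrow> real) \<Rightarrow> ('t \<Rightarrow> int set) \<Rightarrow> 't \<times> 't \<Rightarrow> 't \<times> 't \<Rightarrow> bool" where
  "dom_ne cost RI li lj \<longleftrightarrow> cost li \<le> cost lj \<and> RI_sup_ne RI li lj"

end

theory Submission
  imports Defs
begin

theorem proposition4:
  fixes RI :: "'t \<Rightarrow> int set"
    and A :: "'k \<Rightarrow> int set"
    and oplus :: "'t \<Rightarrow> 'k \<Rightarrow> 't set"
    and endnode :: "'t \<Rightarrow> 'n"
    and cost :: "'t \<times> 't \<Rightarrow> real"
    and k :: 'k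
    and li lj :: "'t \<times> 't"
  assumes RI_int: "\<And>t. int_interval (RI t)"
    and oplus_max: "\<And>t k t'. t' \<in> oplus t k \<Longrightarrow> max_int_interval_in (RI t') (RI t \<inter> A k)"
    and oplus_all: "\<And>t k J. max_int_interval_in J (RI t \<inter> A k) \<Longrightarrow> \<exists>t'\<in>oplus t k. RI t' = J"
    and li_ne: "endnode (fst li) \<noteq> endnode (snd li)"
    and lj_ne: "endnode (fst lj) \<noteq> endnode (snd lj)"
    and ext_ne: "\<And>l l'. endnode (fst l) \<noteq> endnode (snd l) \<Longrightarrow> l' \<in> label_ext oplus k l \<Longrightarrow>
                   endnode (fst l') \<noteq> endnode (snd l')"
    and cost_mono: "\<And>l1 l2. cost l1 \<le> cost l2 \<Longrightarrow>
                   (\<forall>l'\<in>label_ext oplus k l1. \<forall>l\<in>label_ext oplus k l2. cost l' \<le> cost l)"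
    and dom: "dom_ne cost RI li lj"
  shows "\<forall>l\<in>label_ext oplus k lj. \<exists>l'\<in>label_ext oplus k li. dom_ne cost RI l' l"
proof
  fix l assume l: "l \<in> label_ext oplus k lj"
  then obtain t where t: "t \<in> oplus (fst lj) k" and l_eq: "l = (t, snd lj)"
    unfolding label_ext_def by auto
  define S where "S = RI (fst li) \<inter> A k"
  define C where "C = {J'. int_interval J' \<and> RI t \<subseteq> J' \<and> J' \<subseteq> S}"
  have mt: "max_int_interval_in (RI t) (RI (fst lj) \<inter> A k)" using oplus_max[OF t] .
  have sub: "RI (fst lj) \<subseteq> RI (fst li)" using dom unfolding dom_ne_def RI_sup_ne_def by auto
  have JC: "RI t \<in> C" using mt sub unfolding C_def S_def max_int_interval_in_def by auto
  obtain a b where ab: "RI (fst li) = {a..b}" using RI_int[of "fst li"] unfolding int_interval_def by auto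
  have finC: "finite C" 
    by (rule finite_subset[of C "Pow {a..b}"]) (auto simp: C_def S_def ab)
  have fin: "\<And>X. X \<in> C \<Longrightarrow> finite X" using ab unfolding C_def S_def
    by (auto intro: finite_subset[of _ "{a..b}"])
  define M where "M = Max (card ` C)"
  have "M \<in> card ` C" unfolding M_def using finC JC by (intro Max_in) auto
  then obtain J' where J'C: "J' \<in> C" and cJ': "card J' = M" by auto
  have Mge: "\<And>X. X \<in> C \<Longrightarrow> card X \<le> M" unfolding M_def using finC by auto
  have "max_int_interval_in J' S"
    unfolding max_int_interval_in_def
  proof (intro conjI allI impI)
    show "int_interval J'" "J' \<subseteq> S" using J'C unfolding C_def by auto
  next
    fix J'' assume h: "int_interval J'' \<and> J' \<subseteq> J'' \<and> J'' \<subseteq> S"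
    then have "J'' \<in> C" using J'C unfolding C_def by auto
    then have "card J'' \<le> card J'" "finite J''" using Mge cJ' fin by auto
    then show "J'' = J'" using h card_seteq by blast
  qed
  then obtain t' where t': "t' \<in> oplus (fst li) k" and RIt': "RI t' = J'"
    using oplus_all unfolding S_def by blast
  have l'm: "(t', snd li) \<in> label_ext oplus k li" using t' unfolding label_ext_def by auto
  have "cost (t', snd li) \<le> cost l"
    using cost_mono[of li lj] dom l l'm unfolding dom_ne_def by blast
  moreover have "RI_sup_ne RI (t', snd li) l"
    using RIt' J'C dom unfolding l_eq RI_sup_ne_def C_def dom_ne_def by auto
  ultimately show "\<exists>l'\<in>label_ext oplus k li. dom_ne cost RI l' l"
    using l'm unfolding dom_ne_def by blast
qed

end
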